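(* Let $K=3$ and $r^\star(a)=\mathbb{1}(a=1)$. For every integer $n>500$ there exists a distribution $\mu$ on ordered pairs of distinct arms such that, with probability at least $0.09$ over a dataset $\mathcal{D}$ of $n$ i.i.d. samples generated as in the context, for every sequence $(r^{(m)})_{m\ge1}\subset\{r\in\mathbb{R}^3:r(3)=0\}$ with $\hat{\mathcal{L}}_{\mathsf{CE}}(\mathcal{D},r^{(m)})\to\inf_{r(3)=0}\hat{\mathcal{L}}_{\mathsf{CE}}(\mathcal{D},r)$, there is $m_0$ such that for all $m\ge m_0$, arm $1$ is not a maximizer of $r^{(m)}$; consequently every policy $\hat\pi_\infty$ supported on $\arg\max_a r^{(m)}(a)$ satisfies $$\mathsf{SubOpt}(\hat\pi_\infty)\ge 1.$$
   Context: $K$-armed bandit preference model. Arms are $[K]$ with deterministic ground-truth rewards $r^\star(a)$. Let $\sigma(x)=e^x/(1+e^x)$. A sample $(a,a',y)$ is generated by drawing $(a,a')\sim\mu$ (a distribution on ordered pairs of distinct arms) and $y\sim\mathrm{Bernoulli}(\sigma(r^\star(a)-r^\star(a')))$, $y=1$ meaning $a$ is preferred; $\mathcal{D}=\{(a_i,a_i',y_i)\}_{i=1}^n$ consists of $n$ i.i.d. samples. Empirical cross-entropy loss: $$\hat{\mathcal{L}}_{\mathsf{CE}}(\mathcal{D},r)=-\frac1n\sum_{i=1}^n\Big[y_i\log\sigma(r(a_i)-r(a_i'))+(1-y_i)\log\sigma(r(a_i')-r(a_i))\Big].$$ The policy $\hat\pi_\infty$ is the greedy policy on the estimated reward, $\hat\pi_\infty(a)=\mathbb{1}(a=\arg\max_{a'}\hat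 r(a'))$ (the $\lambda\to\infty$ limit of the KL-regularized optimum $\pi_\lambda(a)\propto\pi_0(a)e^{\lambda\hat r(a)}$). For a policy $\pi\in\Delta([K])$, $\mathsf{SubOpt}(\pi)=\max_a r^\star(a)-\mathbb{E}_{a\sim\pi}[r^\star(a)]$. *)

theory Defs
  imports "HOL-Probability.Probability"
begin

definition arms3 :: "nat set" where "arms3 = {1, 2, 3}"

definition sigm :: "real \<Rightarrow> real" where "sigm x = exp x / (1 + exp x)"

definition rstar :: "nat \<Rightarrow> real" where "rstar a = (if a = 1 then 1 else 0)"

definition pair_dist :: "(nat \<times> nat) pmf \<Rightarrow> bool" where
  "pair_dist \<mu> \<longleftrightarrow> set_pmf \<mu> \<subseteq> {(a, a'). a \<in> arms3 \<and> a' \<in> arms3 \<and> a \<noteq> a'}"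

text \<open>One sample (a, a', y): (a,a') ~ mu, y ~ Bernoulli(sigma(r a - r a')), y = True means a preferred.\<close>
definition sample_pmf :: "(nat \<Rightarrow> real) \<Rightarrow> (nat \<times> nat) pmf \<Rightarrow> (nat \<times> nat \<times> bool) pmf" where
  "sample_pmf r \<mu> = bind_pmf \<mu> (\<lambda>(a, a'). map_pmf (\<lambda>y. (a, a', y)) (bernoulli_pmf (sigm (r a - r a'))))"

primrec iid_pmf :: "nat \<Rightarrow> 'a pmf \<Rightarrow> 'a list pmf" where
  "iid_pmf 0 p = return_pmf []"
| "iid_pmf (Suc n) p = bind_pmf p (\<lambda>x. map_pmf (\<lambda>xs. x # xs) (iid_pmf n p))"

definition CE_loss :: "(nat \<times> nat \<times> bool) list \<Rightarrow> (nat \<Rightarrow> real) \<Rightarrow> real" where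
  "CE_loss D r = - (1 / real (length D)) *
     (\<Sum>i<length D. (case D ! i of (a, a', y) \<Rightarrow>
        of_bool y * ln (sigm (r a - r a')) + (1 - of_bool y) * ln (sigm (r a' - r a))))"

definition argmax_arms :: "(nat \<Rightarrow> real) \<Rightarrow> nat set" where
  "argmax_arms r = {a \<in> arms3. \<forall>b \<in> arms3. r b \<le> r a}"

definition SubOpt :: "nat pmf \<Rightarrow> real" where
  "SubOpt \<pi> = Max (rstar ` arms3) - measure_pmf.expectation \<pi> rstar"

end

theory Submission imports Defs begin

definition tm :: "(nat \<Rightarrow> real) \<Rightarrow> nat \<times> nat \<times> bool \<Rightarrow> real" where
  "tm r x = (case x of (a, a', y) \<Rightarrow>
        of_bool y * ln (sigm (r a - r a')) + (1 - of_bool y) * ln (sigm (r a' - r a)))"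

lemma sigm_pos: "0 < sigm x" and sigm_lt1: "sigm x < 1"
proof -
  have "0 < 1 + exp x" by (simp add: add_pos_pos)
  then show "0 < sigm x" "sigm x < 1" by (auto simp: sigm_def divide_less_eq)
qed

lemma sigm_mono: "x < y \<Longrightarrow> sigm x < sigm y"
proof -
  assume "x < y"
  have "sigm x = 1 - 1 / (1 + exp x)" "sigm y = 1 - 1 / (1 + exp y)"
    proof -
    have "1 + exp x > 0" "1 + exp y > 0" by (auto simp: add_pos_pos)
    then show "sigm x = 1 - 1 / (1 + exp x)" "sigm y = 1 - 1 / (1 + exp y)"
      by (auto simp: sigm_def field_simps)
  qed
  moreover have "1 / (1 + exp y) < 1 / (1 + exp x)"
    using \<open>x < y\<close> by (intro divide_strict_left_mono) (auto simp: add_pos_pos)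
  ultimately show ?thesis by simp
qed

lemma tm_le0: "tm r x \<le> 0"
proof -
  have "ln (sigm z) \<le> 0" for z using sigm_pos[of z] sigm_lt1[of z] by simp
  then show ?thesis unfolding tm_def by (cases x) (auto)
qed

lemma CE_tm: "CE_loss D r = - (1 / real (length D)) * (\<Sum>i<length D. tm r (D ! i))"
  unfolding CE_loss_def tm_def by simp

lemma CE_nonneg: "CE_loss D r \<ge> 0"
  unfolding CE_tm using tm_le0 by (simp add: sum_nonpos divide_nonpos_nonneg)

definition good :: "(nat \<times> nat \<times> bool) list \<Rightarrow> bool" where
  "good D \<longleftrightarrow> (\<forall>x\<in>set D. x \<in> {(1,2,False),(2,3,True),(2,3,False)}) \<and> (1,2,False) \<in> set D"

lemma gap:
  assumes g: "good D" and r3: "r 3 = 0" and le: "r 2 \<le> r 1"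
  shows "CE_loss D (r(1 := r 2 - 1)) + (ln (sigm 1) - ln (sigm 0)) / real (length D) \<le> CE_loss D r"
proof -
  define r' where "r' = r(1 := r 2 - 1)"
  define c where "c = ln (sigm 1) - ln (sigm 0)"
  define N where "N = length D"
  from g obtain j where j: "j < N" "D ! j = (1,2,False)"
    unfolding good_def N_def by (metis in_set_conv_nth)
  have N: "N > 0" using j by simp
  have cpos: "c > 0" unfolding c_def using sigm_mono[of 0 1] sigm_pos[of 0] by simp
  have ge: "tm r' (D ! i) - tm r (D ! i) \<ge> 0" if "i < N" for i
  proof -
    have "D ! i \<in> {(1,2,False),(2,3,True),(2,3,False)}" using g that unfolding good_def N_def by auto
    moreover have "ln (sigm (r 2 - r 1)) \<le> ln (sigm 1)"
      using sigm_mono[of "r 2 - r 1" 1] le sigm_pos by (auto)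
    ultimately show ?thesis unfolding tm_def r'_def by auto
  qed
  have gj: "tm r' (D ! j) - tm r (D ! j) \<ge> c"
  proof -
    have "sigm (r 2 - r 1) \<le> sigm 0"
      using sigm_mono[of "r 2 - r 1" 0] le by (cases "r 2 = r 1") auto
    then have "ln (sigm (r 2 - r 1)) \<le> ln (sigm 0)" using sigm_pos by simp
    then show ?thesis unfolding tm_def r'_def c_def using j by simp
  qed
  have "c \<le> (\<Sum>i<N. tm r' (D ! i) - tm r (D ! i))"
    using member_le_sum[of j "{..<N}" "\<lambda>i. tm r' (D ! i) - tm r (D ! i)"] ge gj j by auto
  then have "c \<le> (\<Sum>i<N. tm r' (D ! i)) - (\<Sum>i<N. tm r (D ! i))"
    by (simp add: sum_subtractf)
  then have "c / N \<le> ((\<Sum>i<N. tm r' (D ! i)) - (\<Sum>i<N. tm r (D ! i))) / N"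
    using N by (simp add: divide_right_mono)
  then show ?thesis unfolding CE_tm r'_def[symmetric] c_def[symmetric] N_def[symmetric]
    by (simp add: diff_divide_distrib)
qed

lemma det:
  assumes g: "good D"
  shows "\<forall>rs :: nat \<Rightarrow> nat \<Rightarrow> real.
            ((\<forall>m. rs m 3 = 0) \<and>
             ((\<lambda>m. CE_loss D (rs m)) \<longlonglongrightarrow> (INF r \<in> {r :: nat \<Rightarrow> real. r 3 = 0}. CE_loss D r)))
            \<longrightarrow> (\<exists>m0. \<forall>m \<ge> m0. 1 \<notin> argmax_arms (rs m) \<and>
                   (\<forall>\<pi> :: nat pmf. set_pmf \<pi> \<subseteq> argmax_arms (rs m) \<longrightarrow> SubOpt \<pi> \<ge> 1))"
proof (intro allI impI, elim conjE)
  fix rs :: "nat \<Rightarrow> nat \<Rightarrow> real"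
  assume r3: "\<forall>m. rs m 3 = 0"
  define I where "I = (INF r \<in> {r :: nat \<Rightarrow> real. r 3 = 0}. CE_loss D r)"
  assume lim: "(\<lambda>m. CE_loss D (rs m)) \<longlonglongrightarrow> I"
  define c where "c = ln (sigm 1) - ln (sigm 0)"
  have cpos: "c > 0" unfolding c_def using sigm_mono[of 0 1] sigm_pos[of 0] by simp
  have N: "length D > 0" using g unfolding good_def by auto
  have "I < I + c / length D" using cpos N by simp
  from order_tendstoD(2)[OF lim this] obtain m0 where
    m0: "\<forall>m\<ge>m0. CE_loss D (rs m) < I + c / length D"
    unfolding eventually_sequentially by blast
  have bdd: "bdd_below ((\<lambda>r. CE_loss D r) ` {r. r 3 = 0})"
    using CE_nonneg by (intro bdd_belowI2[of _ 0]) auto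
  have lt: "rs m 1 < rs m 2" if "m \<ge> m0" for m
  proof (rule ccontr)
    assume "\<not> ?thesis"
    then have le: "rs m 2 \<le> rs m 1" by simp
    have "I \<le> CE_loss D ((rs m)(1 := rs m 2 - 1))"
      unfolding I_def using r3 by (intro cINF_lower[OF bdd]) auto
    with gap[OF g _ le] r3 have "I + c / length D \<le> CE_loss D (rs m)"
      unfolding c_def by fastforce
    with m0 that show False by auto
  qed
  show "\<exists>m0. \<forall>m \<ge> m0. 1 \<notin> argmax_arms (rs m) \<and>
                   (\<forall>\<pi> :: nat pmf. set_pmf \<pi> \<subseteq> argmax_arms (rs m) \<longrightarrow> SubOpt \<pi> \<ge> 1)"
  proof (intro exI allI impI conjI)
    fix m assume m: "m \<ge> m0"
    show n1: "1 \<notin> argmax_arms (rs m)"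
      using lt[OF m] unfolding argmax_arms_def arms3_def by auto
    fix \<pi> :: "nat pmf" assume sub: "set_pmf \<pi> \<subseteq> argmax_arms (rs m)"
    have "measure_pmf.expectation \<pi> rstar = measure_pmf.expectation \<pi> (\<lambda>_. 0)"
    proof (rule integral_cong_AE)
      show "AE x in measure_pmf \<pi>. rstar x = 0"
        using sub n1 by (auto simp: AE_measure_pmf_iff rstar_def)
    qed auto
    moreover have "Max (rstar ` arms3) = 1" by (simp add: arms3_def rstar_def)
    ultimately show "SubOpt \<pi> \<ge> 1" unfolding SubOpt_def by simp
  qed
qed


lemma iid_all: "emeasure (measure_pmf (iid_pmf n p)) {xs. set xs \<subseteq> S} = emeasure (measure_pmf p) S ^ n"
proof (induction n)
  case 0 then show ?case by simp
next
  case (Suc n)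
  have pre: "(Cons x) -` {xs. set xs \<subseteq> S} = (if x \<in> S then {xs. set xs \<subseteq> S} else {})" for x
    by auto
  have "emeasure (measure_pmf (iid_pmf (Suc n) p)) {xs. set xs \<subseteq> S}
     = (\<integral>\<^sup>+x. indicator S x * emeasure (measure_pmf p) S ^ n \<partial>p)"
    by (auto simp: pre Suc intro!: nn_integral_cong split: split_indicator)
  also have "\<dots> = emeasure (measure_pmf p) S * emeasure (measure_pmf p) S ^ n"
    by (simp add: nn_integral_multc)
  finally show ?case by simp
qed

lemma sigm_0: "sigm 0 = 1/2" by (simp add: sigm_def)

abbreviation "muP p \<equiv> map_pmf (\<lambda>b. if b then (1::nat,2::nat) else (2,3)) (bernoulli_pmf p)"

lemma probA:
  assumes "0 < p" "p < 1"
  shows "emeasure (measure_pmf (sample_pmf rstar (muP p)))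
    {(1,2,False),(2,3,True),(2,3,False)} = ennreal (1 - p * sigm 1)"
proof -
  have p1: "(\<lambda>y. (Suc 0, 2::nat, y)) -` {(Suc 0, 2::nat, False), (2, 3, True), (2, 3, False)} = {False}" by auto
  have p2: "(\<lambda>y. (2::nat, 3::nat, y)) -` {(Suc 0, 2::nat, False), (2, 3, True), (2, 3, False)} = UNIV" by auto
  have s: "0 < sigm 1" "sigm 1 < 1" using sigm_pos sigm_lt1 by auto
  have e: "emeasure (measure_pmf (bernoulli_pmf (sigm 1))) {False} = ennreal (1 - sigm 1)"
    using s by (simp add: emeasure_pmf_single)
  have "ennreal (1 - sigm 1) * ennreal p + ennreal (1 - p) = ennreal ((1 - sigm 1) * p + (1 - p))"
    using s assms by (simp add: ennreal_mult[symmetric] ennreal_plus[symmetric] del: ennreal_plus)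
  also have "(1 - sigm 1) * p + (1 - p) = 1 - p * sigm 1" by (simp add: algebra_simps)
  finally have f: "ennreal (1 - sigm 1) * ennreal p + ennreal (1 - p) = ennreal (1 - p * sigm 1)" .
  show ?thesis
    using assms by (simp add: sample_pmf_def rstar_def p1 p2 e f)
qed

lemma probB:
  assumes "0 < p" "p < 1"
  shows "emeasure (measure_pmf (sample_pmf rstar (muP p)))
    {(2,3,True),(2,3,False)} = ennreal (1 - p)"
proof -
  have p1: "(\<lambda>y. (Suc 0, 2::nat, y)) -` {(2::nat, 3::nat, True), (2, 3, False)} = {}" by auto
  have p2: "(\<lambda>y. (2::nat, 3::nat, y)) -` {(2::nat, 3::nat, True), (2, 3, False)} = UNIV" by auto
  show ?thesis
    using assms by (simp add: sample_pmf_def rstar_def p1 p2)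
qed


lemma pow_diff: fixes x y :: real shows "0 \<le> y \<Longrightarrow> y \<le> x \<Longrightarrow> x ^ Suc k - y ^ Suc k \<ge> Suc k * (x - y) * y ^ k"
proof (induction k)
  case 0 then show ?case by simp
next
  case (Suc k)
  have xy: "0 \<le> y" "y \<le> x" by fact+
  have ih: "x ^ Suc k - y ^ Suc k \<ge> Suc k * (x - y) * y ^ k" using Suc by simp
  have gen: "u * a - v * b = u*(a - b) + (u-v)*b" for u a v b :: real by (simp add: algebra_simps)
  have nn: "0 \<le> Suc k * (x - y) * y ^ k" using xy by simp
  have "x ^ Suc (Suc k) - y ^ Suc (Suc k) = x * (x ^ Suc k - y ^ Suc k) + (x - y) * y ^ Suc k"
    using gen[of x "x ^ Suc k" y "y ^ Suc k"] by simp
  also have "x * (x ^ Suc k - y ^ Suc k) \<ge> y * (Suc k * (x - y) * y ^ k)"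
    using mult_mono[OF xy(2) ih _ nn] xy by linarith
  moreover have "y * (Suc k * (x - y) * y ^ k) + (x - y) * y ^ Suc k = Suc (Suc k) * (x - y) * y ^ Suc k"
    by (simp add: algebra_simps)
  ultimately show ?case by linarith
qed

lemma num_bound:
  fixes n :: nat assumes "n > 500"
  shows "(1 - sigm 1 / n) ^ n - (1 - 1 / n) ^ n \<ge> 0.09"
proof -
  obtain k where k: "n = Suc k" using assms by (cases n) auto
  have kpos: "k > 0" using assms k by simp
  define x where "x = 1 - sigm 1 / n"
  define y where "y = 1 - 1 / n"
  have s: "0 < sigm 1" "sigm 1 < 1" using sigm_pos sigm_lt1 by auto
  have y0: "0 \<le> y" using assms unfolding y_def by simp
  have yx: "y \<le> x" using s assms unfolding x_def y_def by (simp add: divide_right_mono)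
  have "x - y = (1 - sigm 1) / n" unfolding x_def y_def by (simp add: diff_divide_distrib)
  then have d: "Suc k * (x - y) = 1 - sigm 1" using assms unfolding k[symmetric] by simp
  have "y ^ k \<ge> 1 / exp 1"
  proof -
    have yk: "y = 1 / (1 + 1 / k)" unfolding y_def k using kpos by (simp add: field_simps)
    have "(1 + 1 / real k) ^ k \<le> exp (1 / k) ^ k"
      by (intro power_mono) (use exp_ge_add_one_self[of "1/k"] in \<open>auto simp: add.commute\<close>)
    also have "\<dots> = exp 1" using kpos by (simp add: exp_of_nat_mult[symmetric])
    finally have "(1 + 1 / real k) ^ k \<le> exp 1" .
    then show ?thesis unfolding yk power_one_over
      by (intro divide_left_mono mult_pos_pos zero_less_power) (auto simp: add_pos_nonneg)
  qed
  have "x ^ n - y ^ n \<ge> (1 - sigm 1) * y ^ k" using pow_diff[OF y0 yx, of k] d k by simp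
  moreover have "(1 - sigm 1) * y ^ k \<ge> (1 - sigm 1) * (1 / exp 1)"
    using \<open>y ^ k \<ge> 1 / exp 1\<close> s by (intro mult_left_mono) auto
  moreover have "(1 - sigm 1) * (1 / exp 1) \<ge> 0.09"
  proof -
    have e: "exp 1 < (272/100::real)" by (rule e_less_272)
    have ep: "1 + exp (1::real) > 0" by (simp add: add_pos_pos)
    have "1 - sigm 1 = 1 / (1 + exp 1)" unfolding sigm_def
      using ep by (simp add: field_simps)
    then have "(1 - sigm 1) * (1 / exp 1) = 1 / ((1 + exp 1) * exp 1)" by simp
    moreover have "(1 + exp 1) * exp 1 \<le> (1 + 272/100) * (272/100::real)"
      using e by (intro mult_mono) auto
    moreover have "(0::real) < (1 + exp 1) * exp 1" by (simp add: add_pos_pos)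
    ultimately show ?thesis
      by (simp only:) (simp add: le_divide_eq)
  qed
  ultimately show ?thesis unfolding x_def y_def by linarith
qed


theorem corollary3:
  fixes n :: nat
  assumes "n > 500"
  shows "\<exists>\<mu>. pair_dist \<mu> \<and>
    measure_pmf.prob (iid_pmf n (sample_pmf rstar \<mu>))
      {D. \<forall>rs :: nat \<Rightarrow> nat \<Rightarrow> real.
            ((\<forall>m. rs m 3 = 0) \<and>
             ((\<lambda>m. CE_loss D (rs m)) \<longlonglongrightarrow> (INF r \<in> {r :: nat \<Rightarrow> real. r 3 = 0}. CE_loss D r)))
            \<longrightarrow> (\<exists>m0. \<forall>m \<ge> m0. 1 \<notin> argmax_arms (rs m) \<and>
                   (\<forall>\<pi> :: nat pmf. set_pmf \<pi> \<subseteq> argmax_arms (rs m) \<longrightarrow> SubOpt \<pi> \<ge> 1))}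
    \<ge> 0.09"
proof (intro exI conjI)
  define p :: real where "p = 1 / n"
  have p: "0 < p" "p < 1" using assms unfolding p_def by auto
  show "pair_dist (muP p)" unfolding pair_dist_def arms3_def using p by auto
  define M where "M = iid_pmf n (sample_pmf rstar (muP p))"
  define SA :: "(nat \<times> nat \<times> bool) set" where "SA = {(1,2,False),(2,3,True),(2,3,False)}"
  define SB :: "(nat \<times> nat \<times> bool) set" where "SB = {(2,3,True),(2,3,False)}"
  define A where "A = {xs. set xs \<subseteq> SA}"
  define B where "B = {xs. set xs \<subseteq> SB}"
  have BA: "B \<subseteq> A" unfolding A_def B_def SA_def SB_def by auto
  have eA: "measure_pmf.prob M A = (1 - p * sigm 1) ^ n"
  proof -
    have "ennreal (measure_pmf.prob M A) = ennreal (1 - p * sigm 1) ^ n"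
      using iid_all[of n _ SA] probA[OF p] unfolding M_def A_def SA_def
      by (simp add: measure_pmf.emeasure_eq_measure)
    also have "\<dots> = ennreal ((1 - p * sigm 1) ^ n)"
    proof (rule ennreal_power)
      have "p * sigm 1 \<le> 1 * 1" using p sigm_lt1[of 1] sigm_pos[of 1] by (intro mult_mono) auto
      then show "0 \<le> 1 - p * sigm 1" by simp
    qed
    finally show ?thesis using p sigm_lt1[of 1] sigm_pos[of 1]
      by (subst (asm) ennreal_inj) (auto simp: mult_le_one less_imp_le)
  qed
  have eB: "measure_pmf.prob M B = (1 - p) ^ n"
  proof -
    have "ennreal (measure_pmf.prob M B) = ennreal (1 - p) ^ n"
      using iid_all[of n _ SB] probB[OF p] unfolding M_def B_def SB_def
      by (simp add: measure_pmf.emeasure_eq_measure)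
    also have "\<dots> = ennreal ((1 - p) ^ n)"
      using p by (simp add: ennreal_power)
    finally show ?thesis using p
      by (subst (asm) ennreal_inj) auto
  qed
  define T where "T = {D. \<forall>rs :: nat \<Rightarrow> nat \<Rightarrow> real.
            ((\<forall>m. rs m 3 = 0) \<and>
             ((\<lambda>m. CE_loss D (rs m)) \<longlonglongrightarrow> (INF r \<in> {r :: nat \<Rightarrow> real. r 3 = 0}. CE_loss D r)))
            \<longrightarrow> (\<exists>m0. \<forall>m \<ge> m0. 1 \<notin> argmax_arms (rs m) \<and>
                   (\<forall>\<pi> :: nat pmf. set_pmf \<pi> \<subseteq> argmax_arms (rs m) \<longrightarrow> SubOpt \<pi> \<ge> 1))}"
  have sub: "A - B \<subseteq> T"
    unfolding T_def
    apply (intro subsetI CollectI)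
    apply (rule det)
    by (auto simp: A_def B_def SA_def SB_def good_def)
  have "0.09 \<le> (1 - sigm 1 / n) ^ n - (1 - 1 / n) ^ n" by (rule num_bound[OF assms])
  also have "\<dots> = measure_pmf.prob M (A - B)"
    using BA eA eB unfolding p_def by (simp add: measure_pmf.finite_measure_Diff)
  also have "\<dots> \<le> measure_pmf.prob M T"
    by (rule measure_pmf.finite_measure_mono[OF sub]) simp
  finally show "0.09 \<le> measure_pmf.prob (iid_pmf n (sample_pmf rstar (muP p))) T"
    unfolding M_def .
qed

end
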